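(* Suppose $-A_{22}$ is m-dissipative in $\mathcal H^-$ and $G(\mu)=A_{12}(A_{22}-\mu)^{-1}$ is compact for some (equivalently all) $\mu\in\mathbb C^-$. Then for every $\gamma\in[0,\pi/2)$, $\|G(\mu)\|\to0$ as $|\mu|\to\infty$, uniformly in the sector $\{\mu\ne0:\ |\arg\mu-\pi|\le\gamma\}$.
   Context: $\mathcal H=\mathcal H^+\oplus\mathcal H^-$ is an orthogonal decomposition of a separable Hilbert space. $A_{22}$ is a linear operator in $\mathcal H^-$ with domain $\mathcal D^-$, and $A_{12}:\mathcal D^-\to\mathcal H^+$ is linear; for $\mu\in\rho(A_{22})$, $G(\mu)=A_{12}(A_{22}-\mu)^{-1}$, defined on all of $\mathcal H^-$. An operator $T$ is dissipative if $\operatorname{Re}(Tx,x)\le0$ on $\mathcal D(T)$, and m-dissipative if it is dissipative with $T-\lambda$ boundedly invertible for all $\operatorname{Re}\lambda>0$. $\mathbb C^-=\{\operatorname{Re}\mu<0\}$. *)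

theory Defs
  imports "HOL-Analysis.Analysis"
begin

class complex_normed_vector = real_normed_vector +
  fixes scaleC :: "complex \<Rightarrow> 'a \<Rightarrow> 'a"  (infixr \<open>*\<^sub>C\<close> 75)
  assumes scaleC_add_right: "a *\<^sub>C (x + y) = a *\<^sub>C x + a *\<^sub>C y"
    and scaleC_add_left: "(a + b) *\<^sub>C x = a *\<^sub>C x + b *\<^sub>C x"
    and scaleC_scaleC: "a *\<^sub>C (b *\<^sub>C x) = (a * b) *\<^sub>C x"
    and scaleC_one: "1 *\<^sub>C x = x"
    and scaleC_of_real: "complex_of_real r *\<^sub>C x = r *\<^sub>R x"
    and norm_scaleC: "norm (a *\<^sub>C x) = cmod a * norm x"

class complex_inner = complex_normed_vector +
  fixes cinner :: "'a \<Rightarrow> 'a \<Rightarrow> complex"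
  assumes cinner_commute: "cinner x y = cnj (cinner y x)"
    and cinner_add_left: "cinner (x + y) z = cinner x z + cinner y z"
    and cinner_scaleC_left: "cinner (a *\<^sub>C x) y = a * cinner x y"
    and norm_eq_sqrt_cinner: "norm x = sqrt (Re (cinner x x))"

text \<open>A complex Hilbert space is a complete complex inner product space;
  separability is stated explicitly where needed.\<close>

definition separable_space :: "'a::topological_space itself \<Rightarrow> bool" where
  "separable_space _ \<longleftrightarrow> (\<exists>S::'a set. countable S \<and> closure S = UNIV)"

definition csubspace :: "'a::complex_normed_vector set \<Rightarrow> bool" where
  "csubspace D \<longleftrightarrow> 0 \<in> D \<and> (\<forall>x\<in>D. \<forall>y\<in>D. x + y \<in> D) \<and> (\<forall>c. \<forall>x\<in>D. c *\<^sub>C x \<in> D)"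

definition clinear_on :: "'a::complex_normed_vector set \<Rightarrow> ('a \<Rightarrow> 'b::complex_normed_vector) \<Rightarrow> bool" where
  "clinear_on D T \<longleftrightarrow> csubspace D \<and>
     (\<forall>x\<in>D. \<forall>y\<in>D. T (x + y) = T x + T y) \<and> (\<forall>c. \<forall>x\<in>D. T (c *\<^sub>C x) = c *\<^sub>C T x)"

definition boundedly_invertible :: "'a::complex_normed_vector set \<Rightarrow> ('a \<Rightarrow> 'a) \<Rightarrow> complex \<Rightarrow> bool" where
  "boundedly_invertible D T l \<longleftrightarrow>
     bij_betw (\<lambda>x. T x - l *\<^sub>C x) D UNIV \<and>
     (\<exists>C. \<forall>x\<in>D. norm x \<le> C * norm (T x - l *\<^sub>C x))"

definition resolvent_set :: "'a::complex_normed_vector set \<Rightarrow> ('a \<Rightarrow> 'a) \<Rightarrow> complex set" where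
  "resolvent_set D T = {\<mu>. boundedly_invertible D T \<mu>}"

text \<open>The resolvent \<open>(T - \<mu>)\<^sup>-\<^sup>1\<close>, defined on the whole space for \<open>\<mu>\<close> in the resolvent set.\<close>
definition resolvent :: "'a::complex_normed_vector set \<Rightarrow> ('a \<Rightarrow> 'a) \<Rightarrow> complex \<Rightarrow> 'a \<Rightarrow> 'a" where
  "resolvent D T \<mu> y = (THE x. x \<in> D \<and> T x - \<mu> *\<^sub>C x = y)"

definition dissipative :: "'a::complex_inner set \<Rightarrow> ('a \<Rightarrow> 'a) \<Rightarrow> bool" where
  "dissipative D T \<longleftrightarrow> (\<forall>x\<in>D. Re (cinner (T x) x) \<le> 0)"

definition m_dissipative :: "'a::complex_inner set \<Rightarrow> ('a \<Rightarrow> 'a) \<Rightarrow> bool" where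
  "m_dissipative D T \<longleftrightarrow> clinear_on D T \<and> dissipative D T \<and>
     (\<forall>l. Re l > 0 \<longrightarrow> boundedly_invertible D T l)"

definition compact_operator :: "('a::real_normed_vector \<Rightarrow> 'b::real_normed_vector) \<Rightarrow> bool" where
  "compact_operator G \<longleftrightarrow> (\<forall>S. bounded S \<longrightarrow> compact (closure (G ` S)))"

definition Gop :: "'b::complex_normed_vector set \<Rightarrow> ('b \<Rightarrow> 'b) \<Rightarrow> ('b \<Rightarrow> 'a) \<Rightarrow> complex \<Rightarrow> 'b \<Rightarrow> 'a" where
  "Gop D A22 A12 \<mu> = (\<lambda>y. A12 (resolvent D A22 \<mu> y))"

end

theory Submission
  imports Defs
begin


lemma scaleC_zero_left[simp]: "(0::complex) *\<^sub>C x = 0"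
  using scaleC_of_real[of 0 x] by simp
lemma scaleC_zero_right[simp]: "a *\<^sub>C (0::'a::complex_normed_vector) = 0"
  using scaleC_add_right[of a "0::'a" 0] by simp
lemma scaleC_minus_left: "(- a) *\<^sub>C x = - (a *\<^sub>C x)"
  using scaleC_add_left[of a "-a" x] by (simp add: eq_neg_iff_add_eq_0 add.commute)
lemma scaleC_minus_right: "a *\<^sub>C (- x) = - (a *\<^sub>C x)"
  using scaleC_add_right[of a x "-x"] by (simp add: eq_neg_iff_add_eq_0 add.commute)
lemma scaleC_diff_left: "(a - b) *\<^sub>C x = a *\<^sub>C x - b *\<^sub>C x"
  using scaleC_add_left[of a "-b" x] by (simp add: scaleC_minus_left)
lemma scaleC_diff_right: "a *\<^sub>C (x - y) = a *\<^sub>C x - a *\<^sub>C y"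
  using scaleC_add_right[of a x "-y"] by (simp add: scaleC_minus_right)
lemma scaleR_scaleC: "r *\<^sub>R x = complex_of_real r *\<^sub>C x"
  by (simp add: scaleC_of_real)

lemma cinner_zero_left[simp]: "cinner 0 y = 0"
  using cinner_scaleC_left[of 0 0 y] by simp
lemma cinner_minus_left: "cinner (- x) y = - cinner x y"
  using cinner_add_left[of x "-x" y] by (simp add: eq_neg_iff_add_eq_0 add.commute)
lemma cinner_diff_left: "cinner (x - y) z = cinner x z - cinner y z"
  using cinner_add_left[of x "-y" z] by (simp add: cinner_minus_left)
lemma cinner_add_right: "cinner x (y + z) = cinner x y + cinner x z"
  by (metis cinner_commute cinner_add_left complex_cnj_add)
lemma cinner_scaleC_right: "cinner x (a *\<^sub>C y) = cnj a * cinner x y"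
  by (metis cinner_commute cinner_scaleC_left complex_cnj_mult)
lemma cinner_zero_right[simp]: "cinner x 0 = 0"
  by (metis cinner_commute cinner_zero_left complex_cnj_zero)
lemma cinner_minus_right: "cinner x (- y) = - cinner x y"
  by (metis cinner_commute cinner_minus_left complex_cnj_minus)
lemma cinner_diff_right: "cinner x (y - z) = cinner x y - cinner x z"
  by (metis cinner_commute cinner_diff_left complex_cnj_diff)

lemma cinner_self_Re: "Re (cinner x x) = (norm x)\<^sup>2"
proof -
  have "0 \<le> Re (cinner x x)"
    by (metis norm_eq_sqrt_cinner norm_ge_zero real_sqrt_ge_0_iff)
  then show ?thesis by (simp add: norm_eq_sqrt_cinner)
qed
lemma cinner_self_Im: "Im (cinner x x) = 0"
  using cinner_commute[of x x] by (metis complex_cnj_cancel_iff Reals_cnj_iff complex_is_Real_iff)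
lemma cinner_self: "cinner x x = complex_of_real ((norm x)\<^sup>2)"
  by (simp add: complex_eq_iff cinner_self_Re cinner_self_Im)

lemma cinner_self_eq_0: "cinner x x = 0 \<longleftrightarrow> x = 0"
  by (simp add: cinner_self)

lemma norm_diff_sq: "(norm (x - y))\<^sup>2 = (norm x)\<^sup>2 - 2 * Re (cinner x y) + (norm y)\<^sup>2"
proof -
  have "cinner (x - y) (x - y) = cinner x x - cinner x y - cnj (cinner x y) + cinner y y"
    by (simp add: cinner_diff_left cinner_diff_right) (metis cinner_commute)
  then have "Re (cinner (x - y) (x - y)) = Re (cinner x x) - 2 * Re (cinner x y) + Re (cinner y y)"
    by simp
  then show ?thesis by (simp add: cinner_self_Re)
qed
lemma norm_add_sq: "(norm (x + y))\<^sup>2 = (norm x)\<^sup>2 + 2 * Re (cinner x y) + (norm y)\<^sup>2"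
  using norm_diff_sq[of x "-y"] by (simp add: cinner_minus_right)

lemma cauchy_schwarz: "cmod (cinner x y) \<le> norm x * norm y"
proof (cases "y = 0")
  case True then show ?thesis by simp
next
  case False
  define a where "a = cinner x y"
  define n where "n = (norm y)\<^sup>2"
  have n: "n > 0" using False by (simp add: n_def)
  define t where "t = a / complex_of_real n"
  have "0 \<le> (norm (x - t *\<^sub>C y))\<^sup>2" by simp
  also have "\<dots> = (norm x)\<^sup>2 - 2 * Re (cnj t * a) + (cmod t)\<^sup>2 * n"
    by (simp add: norm_diff_sq cinner_scaleC_right norm_scaleC power_mult_distrib a_def n_def)
  also have "\<dots> = (norm x)\<^sup>2 - (cmod a)\<^sup>2 / n"
  proof -
    have "cnj t * a = complex_of_real ((cmod a)\<^sup>2 / n)"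
      using n by (simp add: t_def mult.commute[of "cnj a"] complex_norm_square[symmetric])
    moreover have "(cmod t)\<^sup>2 * n = (cmod a)\<^sup>2 / n"
      using n by (simp add: t_def norm_divide power_divide power2_eq_square)
    ultimately show ?thesis by simp
  qed
  finally have "(cmod a)\<^sup>2 \<le> (norm x)\<^sup>2 * n" using n by (simp add: field_simps)
  then have "(cmod a)\<^sup>2 \<le> (norm x * norm y)\<^sup>2" by (simp add: n_def power_mult_distrib)
  then show ?thesis unfolding a_def
    by (meson mult_nonneg_nonneg norm_ge_zero power2_le_imp_le)
qed



lemma csubspace_diff: "csubspace N \<Longrightarrow> a \<in> N \<Longrightarrow> b \<in> N \<Longrightarrow> a - b \<in> N"
  unfolding csubspace_def
  by (metis scaleC_of_real scaleR_minus1_left of_real_minus of_real_1 diff_conv_add_uminus)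

lemma csubspace_half: "csubspace N \<Longrightarrow> a \<in> N \<Longrightarrow> b \<in> N \<Longrightarrow> (1/2) *\<^sub>R (a + b) \<in> N"
  unfolding csubspace_def by (metis scaleC_of_real)

lemma parallelogram: fixes x y :: "'a::complex_inner" shows "(norm (x + y))\<^sup>2 + (norm (x - y))\<^sup>2 = 2 * (norm x)\<^sup>2 + 2 * (norm y)\<^sup>2"
  using norm_add_sq[of x y] norm_diff_sq[of x y] by linarith

lemma proj_orth:
  fixes N :: "'a::{complex_inner,complete_space} set"
  assumes cl: "closed N" and sub: "csubspace N" and p: "p \<notin> N"
  shows "\<exists>z. z \<noteq> 0 \<and> (\<forall>n\<in>N. cinner n z = 0)"
proof -
  define d where "d = infdist p N"
  have N0: "0 \<in> N" using sub by (simp add: csubspace_def)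
  have Nne: "N \<noteq> {}" using N0 by auto
  have dle: "d \<le> dist p a" if "a \<in> N" for a
    unfolding d_def using that by (rule infdist_le)
  have d0: "0 \<le> d" unfolding d_def by (rule infdist_nonneg)
  have "\<forall>k::nat. \<exists>a\<in>N. dist p a < d + 1 / (real k + 1)"
  proof
    fix k :: nat
    have "(INF a\<in>N. dist p a) < d + 1 / (real k + 1)"
      using d_def infdist_notempty[OF Nne] by (simp add: add_pos_pos)
    then show "\<exists>a\<in>N. dist p a < d + 1 / (real k + 1)"
      using cINF_less_iff[OF Nne bdd_below_image_dist[of p N]] by blast
  qed
  then obtain a where aN: "\<And>k. a k \<in> N" and ad: "\<And>k. dist p (a k) < d + 1 / (real k + 1)"
    by metis
  have key: "(norm (u - v))\<^sup>2 \<le> 2 * (dist p u)\<^sup>2 + 2 * (dist p v)\<^sup>2 - 4 * d\<^sup>2"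
    if "u \<in> N" "v \<in> N" for u v
  proof -
    define m where "m = (1/2) *\<^sub>R (u + v)"
    have mN: "m \<in> N" unfolding m_def using csubspace_half[OF sub that] .
    have "(p - u) + (p - v) = 2 *\<^sub>R (p - m)" unfolding m_def
      by (simp add: algebra_simps scaleR_2)
    then have "norm ((p - u) + (p - v)) = 2 * dist p m"
      by (simp add: dist_norm)
    moreover have "d \<le> dist p m" using dle[OF mN] .
    ultimately have "4 * d\<^sup>2 \<le> (norm ((p - u) + (p - v)))\<^sup>2"
      using d0 by (simp add: power_mult_distrib power_mono)
    moreover have "(p - u) - (p - v) = v - u" by simp
    ultimately show ?thesis
      using parallelogram[of "p - u" "p - v"] by (simp add: dist_norm norm_minus_commute)
  qed
  have bnd: "(norm (a m - a n))\<^sup>2 \<le> (4 * d + 2) * (1 / (real m + 1) + 1 / (real n + 1))" for m n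
  proof -
    define em where "em = 1 / (real m + 1)"
    define en where "en = 1 / (real n + 1)"
    have em: "0 < em" "em \<le> 1" unfolding em_def by auto
    have en: "0 < en" "en \<le> 1" unfolding en_def by auto
    have "(dist p (a m))\<^sup>2 \<le> (d + em)\<^sup>2"
      using ad[of m] by (simp add: em_def power_mono)
    moreover have "(dist p (a n))\<^sup>2 \<le> (d + en)\<^sup>2"
      using ad[of n] by (simp add: en_def power_mono)
    moreover have "2 * (d + em)\<^sup>2 + 2 * (d + en)\<^sup>2 - 4 * d\<^sup>2 \<le> (4 * d + 2) * (em + en)"
    proof -
      have "em * em \<le> em" "en * en \<le> en" using em en by (auto simp: mult_le_cancel_left1)
      then show ?thesis by (simp add: power2_eq_square algebra_simps)
    qed
    ultimately show ?thesis using key[OF aN aN, of m n] unfolding em_def en_def by linarith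
  qed
  have "Cauchy a"
  proof (rule metric_CauchyI)
    fix e :: real assume e: "0 < e"
    obtain M :: nat where M: "(4 * d + 2) * 2 / e\<^sup>2 < real M"
      using reals_Archimedean2 by blast
    have "\<forall>m\<ge>M. \<forall>n\<ge>M. dist (a m) (a n) < e"
    proof (intro allI impI)
      fix m n assume mn: "M \<le> m" "M \<le> n"
      have "1 / (real m + 1) \<le> 1 / (real M + 1)" "1 / (real n + 1) \<le> 1 / (real M + 1)"
        using mn by (auto simp: frac_le)
      then have "1 / (real m + 1) + 1 / (real n + 1) \<le> 2 / (real M + 1)" by simp
      then have "(4 * d + 2) * (1 / (real m + 1) + 1 / (real n + 1)) \<le> (4 * d + 2) * (2 / (real M + 1))"
        using d0 by (intro mult_left_mono) auto
      then have "(norm (a m - a n))\<^sup>2 \<le> (4 * d + 2) * (2 / (real M + 1))"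
        using bnd[of m n] by linarith
      also have "\<dots> < e\<^sup>2"
      proof -
        have "(4 * d + 2) * 2 < e\<^sup>2 * (real M + 1)"
        proof -
          have e2: "0 < e\<^sup>2" using e by simp
          have "(4 * d + 2) * 2 < real M * e\<^sup>2" using M e2 by (simp add: pos_divide_less_eq)
          also have "\<dots> \<le> e\<^sup>2 * (real M + 1)" using e2 by (simp add: algebra_simps)
          finally show ?thesis .
        qed
        then show ?thesis using e by (simp add: field_simps)
      qed
      finally show "dist (a m) (a n) < e"
        using e by (simp add: dist_norm power_less_imp_less_base)
    qed
    then show "\<exists>M. \<forall>m\<ge>M. \<forall>n\<ge>M. dist (a m) (a n) < e" by blast
  qed
  then obtain q where q: "a \<longlonglongrightarrow> q" using Cauchy_convergent convergent_def by blast
  have qN: "q \<in> N" using closed_sequentially[OF cl] aN q by blast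
  have "dist p q \<le> d"
  proof (rule tendsto_le[OF trivial_limit_sequentially])
    show "(\<lambda>k. d + 1 / (real k + 1)) \<longlonglongrightarrow> d"
      using LIMSEQ_inverse_real_of_nat_add[of d] by (simp add: inverse_eq_divide add.commute)
    show "(\<lambda>k. dist p (a k)) \<longlonglongrightarrow> dist p q" using q by (intro tendsto_intros)
    show "\<forall>\<^sub>F k in sequentially. dist p (a k) \<le> d + 1 / (real k + 1)"
      using ad by (simp add: less_imp_le)
  qed
  define z where "z = p - q"
  have zne: "z \<noteq> 0" using p qN by (auto simp: z_def)
  have zmin: "norm z \<le> norm (z - w)" if "w \<in> N" for w
  proof -
    have "q + w \<in> N" using sub qN that by (simp add: csubspace_def)
    then have "d \<le> dist p (q + w)" by (rule dle)
    moreover have "dist p (q + w) = norm (z - w)" by (simp add: z_def dist_norm algebra_simps)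
    moreover have "norm z = dist p q" by (simp add: z_def dist_norm)
    ultimately show ?thesis using \<open>dist p q \<le> d\<close> by linarith
  qed
  have "cinner w z = 0" if wN: "w \<in> N" for w
  proof (rule ccontr)
    assume "cinner w z \<noteq> 0"
    define c where "c = cinner z w"
    have c: "c \<noteq> 0" using \<open>cinner w z \<noteq> 0\<close> cinner_commute[of z w] by (auto simp: c_def)
    define s where "s = 1 / ((norm w)\<^sup>2 + 1)"
    have pw: "0 < 1 + (norm w)\<^sup>2" by (simp add: add_pos_nonneg)
    have s: "0 < s" "s * (norm w)\<^sup>2 < 1" using pw by (auto simp: s_def field_simps)
    define t where "t = complex_of_real s * c"
    have tw: "t *\<^sub>C w \<in> N" using sub wN by (simp add: csubspace_def)
    have "(norm (z - t *\<^sub>C w))\<^sup>2 = (norm z)\<^sup>2 - 2 * Re (cnj t * c) + (cmod t)\<^sup>2 * (norm w)\<^sup>2"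
      by (simp add: norm_diff_sq cinner_scaleC_right norm_scaleC power_mult_distrib c_def)
    also have "cnj t * c = complex_of_real (s * (cmod c)\<^sup>2)"
      by (simp add: t_def mult.assoc mult.commute[of "cnj c"] complex_norm_square[symmetric])
    also have "(cmod t)\<^sup>2 = s\<^sup>2 * (cmod c)\<^sup>2" using s by (simp add: t_def norm_mult power_mult_distrib)
    finally have "(norm (z - t *\<^sub>C w))\<^sup>2 = (norm z)\<^sup>2 - s * (cmod c)\<^sup>2 * (2 - s * (norm w)\<^sup>2)"
      by (simp add: algebra_simps power2_eq_square)
    moreover have "0 < s * (cmod c)\<^sup>2 * (2 - s * (norm w)\<^sup>2)" using s c by simp
    ultimately have "norm (z - t *\<^sub>C w) < norm z"
      by (smt (verit) norm_ge_zero power_mono)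
    then show False using zmin[OF tw] by linarith
  qed
  then show ?thesis using zne by blast
qed

lemma riesz:
  fixes f :: "'a::{complex_inner,complete_space} \<Rightarrow> complex"
  assumes add: "\<And>x y. f (x + y) = f x + f y" and sc: "\<And>c x. f (c *\<^sub>C x) = c * f x"
    and bd: "\<And>x. cmod (f x) \<le> C * norm x"
  shows "\<exists>h. \<forall>x. f x = cinner x h"
proof (cases "\<forall>x. f x = 0")
  case True then show ?thesis by (intro exI[of _ 0]) simp
next
  case False
  then obtain x0 where x0: "f x0 \<noteq> 0" by blast
  have bl: "bounded_linear f"
  proof
    show "f (x + y) = f x + f y" for x y by (rule add)
    show "f (r *\<^sub>R x) = r *\<^sub>R f x" for r x
      by (simp add: scaleR_scaleC sc scaleR_conv_of_real)
    show "\<exists>K. \<forall>x. norm (f x) \<le> norm x * K" using bd by (metis mult.commute)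
  qed
  define N where "N = {x. f x = 0}"
  have "continuous_on UNIV f" by (rule linear_continuous_on[OF bl])
  then have cl: "closed N" unfolding N_def
    using closed_Collect_eq[OF _ continuous_on_const, of f 0] by simp
  have f0: "f 0 = 0" using sc[of 0 0] by simp
  have sub: "csubspace N" unfolding N_def csubspace_def
  proof (intro conjI ballI allI)
    show "0 \<in> {x. f x = 0}" using f0 by simp
    show "x + y \<in> {x. f x = 0}" if "x \<in> {x. f x = 0}" "y \<in> {x. f x = 0}" for x y
      using that add[of x y] by simp
    show "c *\<^sub>C x \<in> {x. f x = 0}" if "x \<in> {x. f x = 0}" for c x
      using that sc[of c x] by simp
  qed
  have "x0 \<notin> N" using x0 by (simp add: N_def)
  then obtain z where z: "z \<noteq> 0" "\<And>n. n \<in> N \<Longrightarrow> cinner n z = 0"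
    using proj_orth[OF cl sub] by blast
  have nz: "(norm z)\<^sup>2 \<noteq> 0" using z by simp
  have "f x = cinner x (cnj (f z / complex_of_real ((norm z)\<^sup>2)) *\<^sub>C z)" for x
  proof -
    have m1: "f (- y) = - f y" for y
      using sc[of "-1" y] by (simp add: scaleC_minus_left scaleC_one)
    have fd: "f (a - b) = f a - f b" for a b
      using add[of a "-b"] m1[of b] by simp
    have "f (f x *\<^sub>C z - f z *\<^sub>C x) = 0"
      by (simp add: fd sc)
    then have "cinner (f x *\<^sub>C z - f z *\<^sub>C x) z = 0" using z by (simp add: N_def)
    then have "f x * complex_of_real ((norm z)\<^sup>2) = f z * cinner x z"
      by (simp add: cinner_diff_left cinner_scaleC_left cinner_self)
    then have "f x = f z * cinner x z / complex_of_real ((norm z)\<^sup>2)"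
      using nz by (simp add: field_simps)
    then show ?thesis by (simp add: cinner_scaleC_right)
  qed
  then show ?thesis by blast
qed



lemma md_parts:
  assumes md: "m_dissipative D (\<lambda>x. - A22 x)"
  shows "csubspace D"
    and "\<And>x y. x \<in> D \<Longrightarrow> y \<in> D \<Longrightarrow> A22 (x + y) = A22 x + A22 y"
    and "\<And>c x. x \<in> D \<Longrightarrow> A22 (c *\<^sub>C x) = c *\<^sub>C A22 x"
    and "\<And>x. x \<in> D \<Longrightarrow> 0 \<le> Re (cinner (A22 x) x)"
proof -
  have cl: "clinear_on D (\<lambda>x. - A22 x)" using md by (simp add: m_dissipative_def)
  then show "csubspace D" by (simp add: clinear_on_def)
  show "A22 (x + y) = A22 x + A22 y" if "x \<in> D" "y \<in> D" for x y
  proof -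
    have "- A22 (x + y) = - A22 x + - A22 y" using cl that by (simp add: clinear_on_def)
    then show ?thesis by (metis minus_add_distrib minus_equation_iff)
  qed
  show "A22 (c *\<^sub>C x) = c *\<^sub>C A22 x" if "x \<in> D" for c x
  proof -
    have "- A22 (c *\<^sub>C x) = c *\<^sub>C (- A22 x)" using cl that by (simp add: clinear_on_def)
    then show ?thesis by (simp add: scaleC_minus_right)
  qed
  show "0 \<le> Re (cinner (A22 x) x)" if "x \<in> D" for x
    using md that by (simp add: m_dissipative_def dissipative_def cinner_minus_left)
qed

lemma res_ex1:
  assumes md: "m_dissipative D (\<lambda>x. - A22 x)" and mu: "Re \<mu> < 0"
  shows "\<exists>!x. x \<in> D \<and> A22 x - \<mu> *\<^sub>C x = y"
proof -
  have "boundedly_invertible D (\<lambda>x. - A22 x) (- \<mu>)" using md mu by (simp add: m_dissipative_def)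
  then have bij: "bij_betw (\<lambda>x. - A22 x - (- \<mu>) *\<^sub>C x) D UNIV" by (simp add: boundedly_invertible_def)
  have g: "- A22 x - (- \<mu>) *\<^sub>C x = - (A22 x - \<mu> *\<^sub>C x)" for x by (simp add: scaleC_minus_left)
  from bij have "- y \<in> (\<lambda>x. - A22 x - (- \<mu>) *\<^sub>C x) ` D" by (simp add: bij_betw_def)
  then obtain x where x0: "x \<in> D" "- A22 x - (- \<mu>) *\<^sub>C x = - y" by auto
  then have x: "x \<in> D" "A22 x - \<mu> *\<^sub>C x = y" using g[of x] by (simp_all only: neg_equal_iff_equal)
  moreover have "x' = x" if "x' \<in> D" "A22 x' - \<mu> *\<^sub>C x' = y" for x'
  proof -
    have "inj_on (\<lambda>x. - A22 x - (- \<mu>) *\<^sub>C x) D" using bij by (simp add: bij_betw_def)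
    moreover have "- A22 x' - (- \<mu>) *\<^sub>C x' = - A22 x - (- \<mu>) *\<^sub>C x"
      unfolding g using that(2) x(2) by simp
    ultimately show ?thesis using that x by (meson inj_onD)
  qed
  ultimately show ?thesis by blast
qed

lemma res_props:
  assumes md: "m_dissipative D (\<lambda>x. - A22 x)" and mu: "Re \<mu> < 0"
  shows "resolvent D A22 \<mu> y \<in> D" "A22 (resolvent D A22 \<mu> y) - \<mu> *\<^sub>C resolvent D A22 \<mu> y = y"
  using theI'[OF res_ex1[OF md mu, of y]] unfolding resolvent_def by auto

lemma res_unique:
  assumes md: "m_dissipative D (\<lambda>x. - A22 x)" and mu: "Re \<mu> < 0"
    and "x \<in> D" "A22 x - \<mu> *\<^sub>C x = y"
  shows "resolvent D A22 \<mu> y = x"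
  unfolding resolvent_def using the1_equality[OF res_ex1[OF md mu]] assms(3,4) by blast

lemma res_add:
  assumes md: "m_dissipative D (\<lambda>x. - A22 x)" and mu: "Re \<mu> < 0"
  shows "resolvent D A22 \<mu> (x + y) = resolvent D A22 \<mu> x + resolvent D A22 \<mu> y"
proof (rule res_unique[OF md mu])
  let ?a = "resolvent D A22 \<mu> x" and ?b = "resolvent D A22 \<mu> y"
  note P = res_props[OF md mu] md_parts[OF md]
  show "?a + ?b \<in> D" using P by (simp add: csubspace_def)
  have "A22 (?a + ?b) - \<mu> *\<^sub>C (?a + ?b) = (A22 ?a - \<mu> *\<^sub>C ?a) + (A22 ?b - \<mu> *\<^sub>C ?b)"
    using P by (simp add: scaleC_add_right algebra_simps)
  then show "A22 (?a + ?b) - \<mu> *\<^sub>C (?a + ?b) = x + y" using P by simp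
qed

lemma res_scale:
  assumes md: "m_dissipative D (\<lambda>x. - A22 x)" and mu: "Re \<mu> < 0"
  shows "resolvent D A22 \<mu> (c *\<^sub>C x) = c *\<^sub>C resolvent D A22 \<mu> x"
proof (rule res_unique[OF md mu])
  let ?a = "resolvent D A22 \<mu> x"
  note P = res_props[OF md mu] md_parts[OF md]
  show "c *\<^sub>C ?a \<in> D" using P by (simp add: csubspace_def)
  have "A22 (c *\<^sub>C ?a) - \<mu> *\<^sub>C (c *\<^sub>C ?a) = c *\<^sub>C A22 ?a - (c * \<mu>) *\<^sub>C ?a"
    using P(1,5) by (simp add: scaleC_scaleC mult.commute)
  also have "\<dots> = c *\<^sub>C (A22 ?a - \<mu> *\<^sub>C ?a)" by (simp add: scaleC_diff_right scaleC_scaleC)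
  also have "\<dots> = c *\<^sub>C x" using P(2) by simp
  finally show "A22 (c *\<^sub>C ?a) - \<mu> *\<^sub>C (c *\<^sub>C ?a) = c *\<^sub>C x" .
qed

lemma res_bound:
  assumes md: "m_dissipative D (\<lambda>x. - A22 x)" and mu: "Re \<mu> < 0"
  shows "norm (resolvent D A22 \<mu> y) * (- Re \<mu>) \<le> norm y"
proof -
  define x where "x = resolvent D A22 \<mu> y"
  note P = res_props[OF md mu, of y, folded x_def] md_parts[OF md]
  have "cinner y x = cinner (A22 x) x - \<mu> * complex_of_real ((norm x)\<^sup>2)"
    using P(2) by (metis cinner_diff_left cinner_scaleC_left cinner_self)
  then have "Re (cinner y x) = Re (cinner (A22 x) x) - Re \<mu> * (norm x)\<^sup>2" by simp
  moreover have "0 \<le> Re (cinner (A22 x) x)" using P by auto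
  moreover have "Re (cinner y x) \<le> norm y * norm x"
    using cauchy_schwarz[of y x] complex_Re_le_cmod[of "cinner y x"] by linarith
  ultimately have "(- Re \<mu>) * (norm x)\<^sup>2 \<le> norm y * norm x" by linarith
  then have "(norm x * (- Re \<mu>)) * norm x \<le> norm y * norm x" by (simp add: power2_eq_square algebra_simps)
  then have "norm x * (- Re \<mu>) \<le> norm y"
  proof (cases "norm x = 0")
    case False
    then have "0 < norm x" by simp
    then show ?thesis using mult_right_le_imp_le[OF \<open>(norm x * (- Re \<mu>)) * norm x \<le> norm y * norm x\<close>]
      by simp
  qed simp
  then show ?thesis by (simp add: x_def)
qed

lemma sector_bound:
  fixes \<mu> :: complex
  assumes "\<mu> \<noteq> 0" "\<bar>Arg (- \<mu>)\<bar> \<le> \<gamma>" "0 \<le> \<gamma>" "\<gamma> < pi / 2"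
  shows "cmod \<mu> * cos \<gamma> \<le> - Re \<mu>"
proof -
  have "cos \<gamma> \<le> cos \<bar>Arg (- \<mu>)\<bar>"
    using assms by (intro cos_monotone_0_pi_le) auto
  then have "cos \<gamma> \<le> Re (- \<mu>) / cmod (- \<mu>)" using cos_Arg[of "- \<mu>"] assms(1) by simp
  then show ?thesis using assms(1) by (simp add: field_simps)
qed



theorem lemma2p3:
  fixes D :: "'b::{complex_inner, complete_space} set"
    and A22 :: "'b \<Rightarrow> 'b"
    and A12 :: "'b \<Rightarrow> 'a::{complex_inner, complete_space}"
  assumes sepP: "separable_space TYPE('a)"
    and sepM: "separable_space TYPE('b)"
    and A12_lin: "clinear_on D A12"
    and mdiss: "m_dissipative D (\<lambda>x. - A22 x)"
    and cpt: "\<exists>\<mu>. Re \<mu> < 0 \<and> compact_operator (Gop D A22 A12 \<mu>)"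
    and gamma: "0 \<le> \<gamma>" "\<gamma> < pi / 2"
  shows "\<forall>\<epsilon>>0. \<exists>R. \<forall>\<mu>. \<mu> \<noteq> 0 \<and> \<bar>Arg (- \<mu>)\<bar> \<le> \<gamma> \<and> cmod \<mu> > R
            \<longrightarrow> onorm (Gop D A22 A12 \<mu>) \<le> \<epsilon>"
proof -
  note md = mdiss
  obtain \<mu>0 where mu0: "Re \<mu>0 < 0" and cK: "compact_operator (Gop D A22 A12 \<mu>0)" using cpt by blast
  define R where "R = resolvent D A22"
  define G where "G = Gop D A22 A12"
  define K where "K = G \<mu>0"
  define c0 where "c0 = cos \<gamma>"
  have c0: "0 < c0" using gamma unfolding c0_def by (intro cos_gt_zero_pi) auto
  note MP = md_parts[OF md]
  have Rin: "Re \<mu> < 0 \<Longrightarrow> R \<mu> y \<in> D" for \<mu> y using res_props[OF md] by (simp add: R_def)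
  have Req: "Re \<mu> < 0 \<Longrightarrow> A22 (R \<mu> y) - \<mu> *\<^sub>C R \<mu> y = y" for \<mu> y using res_props[OF md] by (simp add: R_def)
  have Runi: "Re \<mu> < 0 \<Longrightarrow> x \<in> D \<Longrightarrow> A22 x - \<mu> *\<^sub>C x = y \<Longrightarrow> R \<mu> y = x" for \<mu> x y
    using res_unique[OF md] by (simp add: R_def)
  have Radd: "Re \<mu> < 0 \<Longrightarrow> R \<mu> (x + y) = R \<mu> x + R \<mu> y" for \<mu> x y
    using res_add[OF md] by (simp add: R_def)
  have Rsc: "Re \<mu> < 0 \<Longrightarrow> R \<mu> (c *\<^sub>C x) = c *\<^sub>C R \<mu> x" for \<mu> c x
    using res_scale[OF md] by (simp add: R_def)
  have Rbd: "Re \<mu> < 0 \<Longrightarrow> norm (R \<mu> y) * (- Re \<mu>) \<le> norm y" for \<mu> y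
    using res_bound[OF md] by (simp add: R_def)
  have A12add: "x \<in> D \<Longrightarrow> y \<in> D \<Longrightarrow> A12 (x + y) = A12 x + A12 y" for x y
    using A12_lin by (simp add: clinear_on_def)
  have A12sc: "x \<in> D \<Longrightarrow> A12 (c *\<^sub>C x) = c *\<^sub>C A12 x" for c x
    using A12_lin by (simp add: clinear_on_def)
  have Gdef: "G \<mu> x = A12 (R \<mu> x)" for \<mu> x by (simp add: G_def Gop_def R_def)
  have Gadd: "Re \<mu> < 0 \<Longrightarrow> G \<mu> (x + y) = G \<mu> x + G \<mu> y" for \<mu> x y
    by (simp add: Gdef Radd A12add Rin)
  have Gsc: "Re \<mu> < 0 \<Longrightarrow> G \<mu> (c *\<^sub>C x) = c *\<^sub>C G \<mu> x" for \<mu> c x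
    by (simp add: Gdef Rsc A12sc Rin)
  have G0: "Re \<mu> < 0 \<Longrightarrow> G \<mu> 0 = 0" for \<mu>
    using Gsc[of \<mu> 0 0] by simp
  have Gnorm: "Re \<mu> < 0 \<Longrightarrow> x \<noteq> 0 \<Longrightarrow> norm (G \<mu> x) = norm x * norm (G \<mu> (complex_of_real (1 / norm x) *\<^sub>C x))"
    for \<mu> x by (simp add: Gsc norm_scaleC norm_divide)
  have Kadd: "K (x + y) = K x + K y" for x y using Gadd[OF mu0] by (simp add: K_def)
  have Ksc: "K (c *\<^sub>C x) = c *\<^sub>C K x" for c x using Gsc[OF mu0] by (simp add: K_def)
  have K0: "K 0 = 0" using G0[OF mu0] by (simp add: K_def)
  obtain CK where CK: "\<And>y. norm (K y) \<le> CK * norm y"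
  proof -
    have "compact (closure (K ` cball 0 1))" using cK by (simp add: compact_operator_def K_def G_def)
    then have "bounded (K ` cball 0 1)" using compact_imp_bounded bounded_subset closure_subset by blast
    then obtain C where "\<forall>z\<in>K ` cball 0 1. norm z \<le> C" unfolding bounded_iff by blast
    then have C: "\<And>y. y \<in> cball 0 1 \<Longrightarrow> norm (K y) \<le> C" by blast
    have "norm (K y) \<le> C * norm y" for y
    proof (cases "y = 0")
      case True then show ?thesis by (simp add: K0)
    next
      case False
      define u where "u = complex_of_real (1 / norm y) *\<^sub>C y"
      have nu: "norm u = 1" using False by (simp add: u_def norm_scaleC norm_divide)
      have "complex_of_real (norm y) *\<^sub>C u = (complex_of_real (norm y) * complex_of_real (1 / norm y)) *\<^sub>C y"
        by (simp add: u_def scaleC_scaleC)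
      also have "complex_of_real (norm y) * complex_of_real (1 / norm y) = 1"
        using False by (simp add: field_simps)
      finally have "y = complex_of_real (norm y) *\<^sub>C u" by (simp add: scaleC_one)
      then have "K y = complex_of_real (norm y) *\<^sub>C K u" using Ksc by metis
      then have "norm (K y) = norm y * norm (K u)" by (simp add: norm_scaleC)
      also have "\<dots> \<le> norm y * C" using C[of u] nu by (intro mult_left_mono) auto
      finally show ?thesis by (simp add: mult.commute)
    qed
    then show ?thesis using that by blast
  qed
  define Sec where "Sec \<mu> \<longleftrightarrow> \<mu> \<noteq> 0 \<and> \<bar>Arg (- \<mu>)\<bar> \<le> \<gamma>" for \<mu>
  have secb: "Sec \<mu> \<Longrightarrow> cmod \<mu> * c0 \<le> - Re \<mu>" for \<mu>
    using sector_bound gamma unfolding Sec_def c0_def by blast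
  have secneg: "Sec \<mu> \<Longrightarrow> Re \<mu> < 0" for \<mu>
  proof -
    assume "Sec \<mu>"
    then have "0 < cmod \<mu> * c0" using c0 by (simp add: Sec_def)
    then show "Re \<mu> < 0" using secb[OF \<open>Sec \<mu>\<close>] by linarith
  qed
  have Rsec: "Sec \<mu> \<Longrightarrow> norm (R \<mu> y) * (cmod \<mu> * c0) \<le> norm y" for \<mu> y
    using order_trans[OF mult_left_mono[OF secb norm_ge_zero] Rbd[OF secneg]] by blast
  define B where "B \<mu> x = x + (\<mu> - \<mu>0) *\<^sub>C R \<mu> x" for \<mu> x
  have RB: "Re \<mu> < 0 \<Longrightarrow> R \<mu>0 (B \<mu> x) = R \<mu> x" for \<mu> x
  proof (rule Runi[OF mu0 Rin])
    assume "Re \<mu> < 0"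
    show "Re \<mu> < 0" by fact
    have "A22 (R \<mu> x) - \<mu>0 *\<^sub>C R \<mu> x = (A22 (R \<mu> x) - \<mu> *\<^sub>C R \<mu> x) + (\<mu> - \<mu>0) *\<^sub>C R \<mu> x"
      by (simp add: scaleC_diff_left)
    then show "A22 (R \<mu> x) - \<mu>0 *\<^sub>C R \<mu> x = B \<mu> x" using Req[OF \<open>Re \<mu> < 0\<close>] by (simp add: B_def)
  qed
  have GB: "Re \<mu> < 0 \<Longrightarrow> G \<mu> x = K (B \<mu> x)" for \<mu> x
    by (simp add: K_def Gdef RB)
  define M where "M = 1 + (1 + cmod \<mu>0) / c0"
  have M0: "0 < M" using c0 by (simp add: M_def add_pos_nonneg)
  have Bbd: "Sec \<mu> \<Longrightarrow> 1 \<le> cmod \<mu> \<Longrightarrow> norm (B \<mu> x) \<le> M * norm x" for \<mu> x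
  proof -
    assume S: "Sec \<mu>" and m1: "1 \<le> cmod \<mu>"
    define r where "r = norm (R \<mu> x)"
    have r: "r * (cmod \<mu> * c0) \<le> norm x" "0 \<le> r" using Rsec[OF S] by (auto simp: r_def)
    have "cmod (\<mu> - \<mu>0) \<le> cmod \<mu> * (1 + cmod \<mu>0)"
    proof -
      have "cmod \<mu>0 \<le> cmod \<mu> * cmod \<mu>0" using mult_right_mono[OF m1 norm_ge_zero[of \<mu>0]] by simp
      then show ?thesis using norm_triangle_ineq4[of \<mu> \<mu>0] by (simp add: distrib_left)
    qed
    then have "cmod (\<mu> - \<mu>0) * r \<le> cmod \<mu> * (1 + cmod \<mu>0) * r" using r(2) by (rule mult_right_mono)
    also have "\<dots> = (1 + cmod \<mu>0) / c0 * (r * (cmod \<mu> * c0))" using c0 by (simp add: field_simps)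
    also have "\<dots> \<le> (1 + cmod \<mu>0) / c0 * norm x" using r(1) c0 by (intro mult_left_mono) auto
    finally have "cmod (\<mu> - \<mu>0) * r \<le> (1 + cmod \<mu>0) / c0 * norm x" .
    moreover have "norm (B \<mu> x) \<le> norm x + cmod (\<mu> - \<mu>0) * r"
      unfolding B_def r_def using norm_triangle_ineq[of x "(\<mu> - \<mu>0) *\<^sub>C R \<mu> x"] by (simp add: norm_scaleC)
    ultimately show ?thesis by (simp add: M_def algebra_simps)
  qed
  have main: "\<exists>Rr. \<forall>\<mu>. Sec \<mu> \<and> cmod \<mu> > Rr \<longrightarrow> (\<forall>x. norm (G \<mu> x) \<le> \<epsilon> * norm x)"
    if eps: "\<epsilon> > 0" for \<epsilon>
  proof (rule ccontr)
    assume neg: "\<not> ?thesis"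
    have "\<exists>\<mu> x. Sec \<mu> \<and> cmod \<mu> > real n + 1 \<and> norm x = 1 \<and> norm (G \<mu> x) > \<epsilon>" for n :: nat
    proof -
      from neg obtain \<mu> x where mu: "Sec \<mu>" "cmod \<mu> > real n + 1" and x: "\<not> norm (G \<mu> x) \<le> \<epsilon> * norm x"
        by blast
      have mneg: "Re \<mu> < 0" using secneg[OF mu(1)] .
      have xn: "x \<noteq> 0" using x G0[OF mneg] eps by auto
      define u where "u = complex_of_real (1 / norm x) *\<^sub>C x"
      have nu: "norm u = 1" using xn by (simp add: u_def norm_scaleC norm_divide)
      have "norm x * \<epsilon> < norm x * norm (G \<mu> u)"
        using x Gnorm[OF mneg xn] by (simp add: u_def mult.commute)
      then have "norm (G \<mu> u) > \<epsilon>" using xn by simp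
      then show ?thesis using mu nu by blast
    qed
    then have "\<forall>n. \<exists>\<mu>. \<exists>x. Sec \<mu> \<and> cmod \<mu> > real n + 1 \<and> norm x = 1 \<and> norm (G \<mu> x) > \<epsilon>" by blast
    from choice[OF this] obtain mu where "\<forall>n. \<exists>x. Sec (mu n) \<and> cmod (mu n) > real n + 1 \<and> norm x = 1 \<and> norm (G (mu n) x) > \<epsilon>"
      by blast
    from choice[OF this] obtain xs where H0: "\<forall>n. Sec (mu n) \<and> cmod (mu n) > real n + 1 \<and> norm (xs n) = 1 \<and> norm (G (mu n) (xs n)) > \<epsilon>"
      by blast
    have H: "\<And>n. Sec (mu n)" "\<And>n. cmod (mu n) > real n + 1"
      "\<And>n. norm (xs n) = 1" "\<And>n. norm (G (mu n) (xs n)) > \<epsilon>" using H0 by auto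
    have Hneg: "Re (mu n) < 0" for n using secneg[OF H(1)] .
    define y where "y n = B (mu n) (xs n)" for n
    have yM: "norm (y n) \<le> M" for n
      using Bbd[OF H(1), of n "xs n"] H(2)[of n] H(3)[of n] by (simp add: y_def)
    have Ky: "K (y n) = G (mu n) (xs n)" for n by (simp add: y_def GB[OF Hneg])
    have "compact (closure (K ` cball 0 M))" using cK by (simp add: compact_operator_def K_def G_def)
    then have sc: "seq_compact (closure (K ` cball 0 M))" by (rule compact_imp_seq_compact)
    have "\<forall>n. (K \<circ> y) n \<in> closure (K ` cball 0 M)"
    proof
      fix n
      have "y n \<in> cball 0 M" using yM[of n] by simp
      then have "K (y n) \<in> K ` cball 0 M" by blast
      then show "(K \<circ> y) n \<in> closure (K ` cball 0 M)" using closure_subset[of "K ` cball 0 M"] unfolding comp_def by blast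
    qed
    from seq_compactE[OF sc this] obtain l r where r: "strict_mono r" and lim: "((K \<circ> y) \<circ> r) \<longlonglongrightarrow> l"
      by blast
    have lim': "(\<lambda>n. K (y (r n))) \<longlonglongrightarrow> l" using lim by (simp add: comp_def)
    have "\<epsilon> \<le> norm l"
    proof (rule LIMSEQ_le_const[OF tendsto_norm[OF lim']])
      show "\<exists>N. \<forall>n\<ge>N. \<epsilon> \<le> norm (K (y (r n)))" using Ky less_imp_le[OF H(4)] by auto
    qed
    define W where "W = {h. (\<lambda>n. cinner (y n) h) \<longlonglongrightarrow> 0}"
    have VW: "h \<in> W" if hk: "\<And>w. cinner (R \<mu>0 w) k = cinner w h" for h k
    proof -
      have nb: "norm (cinner (y n) h) \<le> norm k / c0 * inverse (real (Suc n))" for n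
      proof -
        have "cinner (y n) h = cinner (R (mu n) (xs n)) k"
          using hk[of "y n"] RB[OF Hneg] by (simp add: y_def)
        then have n1: "norm (cinner (y n) h) \<le> norm (R (mu n) (xs n)) * norm k"
          using cauchy_schwarz by simp
        have n2: "norm (R (mu n) (xs n)) \<le> inverse (real (Suc n)) / c0"
        proof -
          have a: "norm (R (mu n) (xs n)) * (cmod (mu n) * c0) \<le> 1" using Rsec[OF H(1), of n "xs n"] H(3)[of n] by simp
          have "real (Suc n) * c0 \<le> cmod (mu n) * c0" using H(2)[of n] c0 by simp
          then have "norm (R (mu n) (xs n)) * (real (Suc n) * c0) \<le> norm (R (mu n) (xs n)) * (cmod (mu n) * c0)"
            by (rule mult_left_mono) simp
          then have "norm (R (mu n) (xs n)) * (real (Suc n) * c0) \<le> 1" using a by linarith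
          moreover have pos: "0 < real (Suc n) * c0" using c0 by simp
          ultimately have "norm (R (mu n) (xs n)) \<le> 1 / (real (Suc n) * c0)"
            using pos_le_divide_eq[OF pos] by simp
          then show ?thesis by (simp add: inverse_mult_distrib divide_inverse)
        qed
        have n3: "norm (R (mu n) (xs n)) * norm k \<le> inverse (real (Suc n)) / c0 * norm k"
          using n2 by (rule mult_right_mono) simp
        have n4: "inverse (real (Suc n)) / c0 * norm k = norm k / c0 * inverse (real (Suc n))"
          by (simp only: divide_inverse mult_ac)
        show ?thesis using n1 n3 n4 by linarith
      qed
      moreover have "(\<lambda>n. norm k / c0 * inverse (real (Suc n))) \<longlonglongrightarrow> 0"
        using tendsto_mult[OF tendsto_const[of "norm k / c0"] LIMSEQ_inverse_real_of_nat] by simp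
      ultimately have "(\<lambda>n. cinner (y n) h) \<longlonglongrightarrow> 0"
        by (intro Lim_null_comparison[of "\<lambda>n. cinner (y n) h" "\<lambda>n. norm k / c0 * inverse (real (Suc n))"] always_eventually allI)
      then show ?thesis unfolding W_def by simp
    qed
    have Wsub: "csubspace W" unfolding csubspace_def W_def
    proof (intro conjI ballI allI)
      show "0 \<in> {h. (\<lambda>n. cinner (y n) h) \<longlonglongrightarrow> 0}" by simp
      show "a + b \<in> {h. (\<lambda>n. cinner (y n) h) \<longlonglongrightarrow> 0}"
        if "a \<in> {h. (\<lambda>n. cinner (y n) h) \<longlonglongrightarrow> 0}" "b \<in> {h. (\<lambda>n. cinner (y n) h) \<longlonglongrightarrow> 0}" for a b
        using tendsto_add_zero[OF that[simplified]] by (simp add: cinner_add_right)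
      show "c *\<^sub>C a \<in> {h. (\<lambda>n. cinner (y n) h) \<longlonglongrightarrow> 0}"
        if "a \<in> {h. (\<lambda>n. cinner (y n) h) \<longlonglongrightarrow> 0}" for c a
        using tendsto_mult[OF tendsto_const[of "cnj c"] that[simplified]] by (simp add: cinner_scaleC_right)
    qed
    have Wcl: "closed W"
    proof -
      have "h \<in> W" if h: "h \<in> closure W" for h
      proof -
        have "\<forall>e>0. \<exists>no. \<forall>n\<ge>no. norm (cinner (y n) h - 0) < e"
        proof (intro allI impI)
          fix e :: real assume e: "0 < e"
          have pos: "0 < e / (2 * M)" using e M0 by simp
          obtain h' where h': "h' \<in> W" "dist h' h < e / (2 * M)"
            using h[unfolded closure_approachable, rule_format, OF pos] by blast
          from h' have "(\<lambda>n. cinner (y n) h') \<longlonglongrightarrow> 0" by (simp add: W_def)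
          from this[unfolded LIMSEQ_iff, rule_format, of "e / 2"] e
          obtain no where no: "\<And>n. n \<ge> no \<Longrightarrow> norm (cinner (y n) h') < e / 2" by auto
          have "norm (cinner (y n) h) < e" if "n \<ge> no" for n
          proof -
            have "cinner (y n) h = cinner (y n) h' + cinner (y n) (h - h')" by (simp add: cinner_diff_right)
            then have "norm (cinner (y n) h) \<le> norm (cinner (y n) h') + norm (cinner (y n) (h - h'))"
              by (simp only: norm_triangle_ineq)
            also have "\<dots> \<le> norm (cinner (y n) h') + norm (y n) * norm (h - h')"
              using cauchy_schwarz[of "y n" "h - h'"] by simp
            also have "norm (y n) * norm (h - h') \<le> M * (e / (2 * M))"
              using yM[of n] h'(2) M0 by (intro mult_mono) (auto simp: dist_norm norm_minus_commute)
            also have "M * (e / (2 * M)) = e / 2" using M0 by simp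
            finally show ?thesis using no[OF that] by linarith
          qed
          then show "\<exists>no. \<forall>n\<ge>no. norm (cinner (y n) h - 0) < e" by auto
        qed
        then show ?thesis unfolding W_def LIMSEQ_iff by simp
      qed
      then show ?thesis using closure_subset_eq by blast
    qed
    have WU: "W = UNIV"
    proof (rule ccontr)
      assume "W \<noteq> UNIV"
      then obtain p where "p \<notin> W" by blast
      from proj_orth[OF Wcl Wsub this] obtain h0 where h0: "h0 \<noteq> 0" "\<And>n. n \<in> W \<Longrightarrow> cinner n h0 = 0"
        by blast
      define f where "f w = cinner (R \<mu>0 w) (R \<mu>0 h0)" for w
      have "\<exists>h. \<forall>w. f w = cinner w h"
      proof (rule riesz)
        show "f (a + b) = f a + f b" for a b by (simp add: f_def Radd[OF mu0] cinner_add_left)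
        show "f (c *\<^sub>C a) = c * f a" for c a by (simp add: f_def Rsc[OF mu0] cinner_scaleC_left)
        show "cmod (f w) \<le> norm (R \<mu>0 h0) / (- Re \<mu>0) * norm w" for w
        proof -
          have 1: "cmod (f w) \<le> norm (R \<mu>0 w) * norm (R \<mu>0 h0)" by (simp add: f_def cauchy_schwarz)
          have 2: "norm (R \<mu>0 w) \<le> norm w / (- Re \<mu>0)"
          proof -
            have p: "0 < - Re \<mu>0" using mu0 by simp
            show ?thesis by (subst pos_le_divide_eq[OF p]) (rule Rbd[OF mu0])
          qed
          have 3: "norm (R \<mu>0 w) * norm (R \<mu>0 h0) \<le> norm w / (- Re \<mu>0) * norm (R \<mu>0 h0)"
            using 2 by (rule mult_right_mono) simp
          have 4: "norm w / (- Re \<mu>0) * norm (R \<mu>0 h0) = norm (R \<mu>0 h0) / (- Re \<mu>0) * norm w"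
            by (simp only: divide_inverse mult_ac)
          show ?thesis using 1 3 4 by linarith
        qed
      qed
      then obtain h where h: "\<And>w. cinner (R \<mu>0 w) (R \<mu>0 h0) = cinner w h" by (auto simp: f_def)
      have "h \<in> W" using VW[of "R \<mu>0 h0" h] h by blast
      then have "cinner h h0 = 0" by (rule h0(2))
      then have "cinner h0 h = 0" by (metis cinner_commute complex_cnj_zero)
      then have "cinner (R \<mu>0 h0) (R \<mu>0 h0) = 0" using h[of h0] by simp
      then have Rh0: "R \<mu>0 h0 = 0" by (simp add: cinner_self_eq_0)
      have A0: "A22 0 = 0"
        using MP(3)[of 0 0] MP(1) by (simp add: csubspace_def)
      have "A22 (R \<mu>0 h0) - \<mu>0 *\<^sub>C R \<mu>0 h0 = h0" by (rule Req[OF mu0])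
      then have "h0 = 0" unfolding Rh0 A0 by simp
      then show False using h0(1) by simp
    qed
    obtain h where hf: "\<And>w. cinner (K w) l = cinner w h"
    proof -
      have "\<exists>h. \<forall>w. cinner (K w) l = cinner w h"
      proof (rule riesz)
        show "cinner (K (a + b)) l = cinner (K a) l + cinner (K b) l" for a b by (simp add: Kadd cinner_add_left)
        show "cinner (K (c *\<^sub>C a)) l = c * cinner (K a) l" for c a by (simp add: Ksc cinner_scaleC_left)
        show "cmod (cinner (K w) l) \<le> (CK * norm l) * norm w" for w
        proof -
          have "cmod (cinner (K w) l) \<le> norm (K w) * norm l" by (rule cauchy_schwarz)
          also have "\<dots> \<le> (CK * norm w) * norm l" using CK by (rule mult_right_mono) simp
          finally show ?thesis by (simp add: algebra_simps)
        qed
      qed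
      then show ?thesis using that by blast
    qed
    have "(\<lambda>n. cinner (y n) h) \<longlonglongrightarrow> 0" using WU unfolding W_def by blast
    then have "(\<lambda>n. cinner (K (y n)) l) \<longlonglongrightarrow> 0" by (simp add: hf)
    from LIMSEQ_subseq_LIMSEQ[OF this r] have L1: "(\<lambda>n. cinner (K (y (r n))) l) \<longlonglongrightarrow> 0"
      by (simp add: comp_def)
    have "(\<lambda>n. cinner (K (y (r n))) l - cinner l l) \<longlonglongrightarrow> 0"
    proof (rule Lim_null_comparison)
      have "norm (cinner (K (y (r n))) l - cinner l l) \<le> norm (K (y (r n)) - l) * norm l" for n
        using cauchy_schwarz[of "K (y (r n)) - l" l] by (simp only: cinner_diff_left)
      then show "\<forall>\<^sub>F n in sequentially. norm (cinner (K (y (r n))) l - cinner l l) \<le> norm (K (y (r n)) - l) * norm l"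
        by simp
      show "(\<lambda>n. norm (K (y (r n)) - l) * norm l) \<longlonglongrightarrow> 0"
        using tendsto_mult[OF tendsto_norm_zero[OF LIM_zero[OF lim']] tendsto_const[of "norm l"]] by simp
    qed
    then have L2: "(\<lambda>n. cinner (K (y (r n))) l) \<longlonglongrightarrow> cinner l l" by (rule LIM_zero_cancel)
    have "cinner l l = 0" using LIMSEQ_unique[OF L2 L1] .
    then have "l = 0" by (simp add: cinner_self_eq_0)
    then show False using \<open>\<epsilon> \<le> norm l\<close> eps by simp
  qed
  show ?thesis
  proof (intro allI impI)
    fix \<epsilon> :: real assume eps: "0 < \<epsilon>"
    obtain Rr where Rr: "\<And>\<mu> x. Sec \<mu> \<Longrightarrow> cmod \<mu> > Rr \<Longrightarrow> norm (G \<mu> x) \<le> \<epsilon> * norm x"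
      using main[OF eps] by blast
    have "onorm (G \<mu>) \<le> \<epsilon>" if "\<mu> \<noteq> 0 \<and> \<bar>Arg (- \<mu>)\<bar> \<le> \<gamma> \<and> cmod \<mu> > Rr" for \<mu>
    proof -
      have b: "norm (G \<mu> x) \<le> \<epsilon> * norm x" for x using Rr[of \<mu> x] that by (simp add: Sec_def)
      show ?thesis unfolding onorm_def
      proof (rule cSUP_least)
        show "UNIV \<noteq> {}" by simp
      next
        fix x
        show "norm (G \<mu> x) / norm x \<le> \<epsilon>"
        proof (cases "x = 0")
          case True then show ?thesis using eps by simp
        next
          case False
          then have p: "0 < norm x" by simp
          show ?thesis by (subst pos_divide_le_eq[OF p]) (use b[of x] in \<open>simp add: mult.commute\<close>)
        qed
      qed
    qed
    then have "\<forall>\<mu>. \<mu> \<noteq> 0 \<and> \<bar>Arg (- \<mu>)\<bar> \<le> \<gamma> \<and> Rr < cmod \<mu> \<longrightarrow> onorm (Gop D A22 A12 \<mu>) \<le> \<epsilon>"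
      unfolding G_def by blast
    then show "\<exists>R. \<forall>\<mu>. \<mu> \<noteq> 0 \<and> \<bar>Arg (- \<mu>)\<bar> \<le> \<gamma> \<and> R < cmod \<mu> \<longrightarrow> onorm (Gop D A22 A12 \<mu>) \<le> \<epsilon>"
      by (rule exI)
  qed
qed

end
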